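(* Let $\omega$ be a clustering state. Then the sesquilinear form $\langle A,B\rangle_\omega:=\sum_{x\in\mathbb Z^D}\big(\omega(\iota_x(A)^*B)-\omega(A^* )\omega(B)\big)$ on $\mathcal O$ is positive semi-definite: $\langle A,A\rangle_\omega\ge0$ for all $A\in\mathcal O$.
   Context: Setting: Fix an integer $D\ge1$ and $\mathbb Z^D$ with $\mathrm{dist}(x,y)=\sum_i|x_i-y_i|$. $\mathcal O$ is a complex normed space with distinguished $\mathbf 1$ of norm 1; finite-dimensional subspaces $\mathcal O_X$ for finite $X\subset\mathbb Z^D$ with $\mathcal O_\emptyset=\mathbb C\mathbf 1$, $X\subset Y\Rightarrow\mathcal O_X\subset\mathcal O_Y$, $\mathcal O_X\cap\mathcal O_Y=\mathcal O_{X\cap Y}$, $\mathcal O=\bigcup_X\mathcal O_X$; $\mathrm{supp}(A)$ is the smallest $X$ with $A\in\mathcal O_X$, $|A|:=|\mathrm{supp}(A)|$, $\mathrm{dist}(A,B)$ the distance between supports ($\mathrm{dist}(A,\mathbf 1)=\infty$). The completion $\mathcal A$ is a unital $C^*$-algebra, each $\mathcal O_X$ a $C^*$-subalgebra, elements with disjoint supports commute and the support of their product is the union. Translations $\iota_x$ ($x\in\mathbb Z^D$) are $*$-automorphisms of $\mathcal A$ with $\iota_x\iota_y=\iota_{x+y}$ and $\mathrm{supp}(\iota_x(A))=\mathrm{supp}(A)+x$. A state is a positive linear functional $\omega$ on $\mathcal A$ with $\omega(\mathbf 1)=1$. A clustering state is a translation-invariant state ($\omega\circ\iota_x=\omega$)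 for which there exist $\nu:\mathbb N\to\mathbb R^+$, $f:\mathbb Z\to\mathbb R^+$ and $p>D$ with $f(d)\le d^{-p}$ for $d>0$, such that $|\omega(AB)-\omega(A)\omega(B)|\le\nu(\ell)\|A\|\|B\|f(\mathrm{dist}(A,B))$ for all $\ell\in\mathbb N$ and $A,B\in\mathcal O$ with $|A|,|B|<\ell$. (The series defining the form converges absolutely for such $\omega$.) *)

theory Defs
  imports "HOL-Analysis.Analysis"
begin

text \<open>Lattice Z^D is modelled as int^'d with D = CARD('d) (finite type, so D \<ge> 1).
  The C*-algebra \<A> (completion of O) is the ambient type 'a, a real Banach algebra
  with unit, equipped with a complex scalar multiplication csmult and an involution star.\<close>

definition l1dist :: "int^'d \<Rightarrow> int^'d \<Rightarrow> nat" where
  "l1dist x y = nat (\<Sum>i\<in>UNIV. \<bar>x$i - y$i\<bar>)"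

definition obs :: "((int^'d) set \<Rightarrow> 'a set) \<Rightarrow> 'a set" where
  "obs Ob = \<Union>{Ob X | X. finite X}"

definition supp :: "((int^'d) set \<Rightarrow> 'a set) \<Rightarrow> 'a \<Rightarrow> (int^'d) set" where
  "supp Ob A = (THE X. finite X \<and> A \<in> Ob X \<and> (\<forall>Y. finite Y \<and> A \<in> Ob Y \<longrightarrow> X \<subseteq> Y))"

text \<open>distance between supports (only used when both supports are nonempty)\<close>
definition supp_dist :: "((int^'d) set \<Rightarrow> 'a set) \<Rightarrow> 'a \<Rightarrow> 'a \<Rightarrow> nat" where
  "supp_dist Ob A B = Min {l1dist x y | x y. x \<in> supp Ob A \<and> y \<in> supp Ob B}"

locale quasi_local_cstar =
  fixes csmult :: "complex \<Rightarrow> 'a::{real_normed_algebra_1, banach} \<Rightarrow> 'a"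
    and star :: "'a \<Rightarrow> 'a"
    and Ob :: "(int^'d) set \<Rightarrow> 'a set"
    and iota :: "int^'d \<Rightarrow> 'a \<Rightarrow> 'a"
  assumes smult_of_real: "csmult (complex_of_real r) a = r *\<^sub>R a"
    and smult_assoc: "csmult (c * d) a = csmult c (csmult d a)"
    and smult_add_left: "csmult (c + d) a = csmult c a + csmult d a"
    and smult_add_right: "csmult c (a + b) = csmult c a + csmult c b"
    and smult_mult_left: "csmult c (a * b) = csmult c a * b"
    and smult_mult_right: "csmult c (a * b) = a * csmult c b"
    and norm_smult: "norm (csmult c a) = cmod c * norm a"
    and star_star: "star (star a) = a"
    and star_add: "star (a + b) = star a + star b"
    and star_smult: "star (csmult c a) = csmult (cnj c) (star a)"
    and star_mult: "star (a * b) = star b * star a"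
    and cstar_identity: "norm (star a * a) = (norm a)\<^sup>2"
    and O_findim: "finite X \<Longrightarrow> \<exists>B. finite B \<and> B \<subseteq> Ob X \<and>
                      Ob X = {\<Sum>b\<in>B. csmult (c b) b | c. True}"
    and O_one: "finite X \<Longrightarrow> 1 \<in> Ob X"
    and O_mult: "finite X \<Longrightarrow> a \<in> Ob X \<Longrightarrow> b \<in> Ob X \<Longrightarrow> a * b \<in> Ob X"
    and O_star: "finite X \<Longrightarrow> a \<in> Ob X \<Longrightarrow> star a \<in> Ob X"
    and O_empty: "Ob {} = range (\<lambda>c. csmult c 1)"
    and O_mono: "finite Y \<Longrightarrow> X \<subseteq> Y \<Longrightarrow> Ob X \<subseteq> Ob Y"
    and O_inter: "finite X \<Longrightarrow> finite Y \<Longrightarrow> Ob X \<inter> Ob Y = Ob (X \<inter> Y)"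
    and obs_dense: "closure (obs Ob) = UNIV"
    and disjoint_commute: "A \<in> obs Ob \<Longrightarrow> B \<in> obs Ob \<Longrightarrow> supp Ob A \<inter> supp Ob B = {} \<Longrightarrow>
        A * B = B * A \<and> (A \<noteq> 0 \<and> B \<noteq> 0 \<longrightarrow> supp Ob (A * B) = supp Ob A \<union> supp Ob B)"
    and iota_add: "iota x (a + b) = iota x a + iota x b"
    and iota_smult: "iota x (csmult c a) = csmult c (iota x a)"
    and iota_mult: "iota x (a * b) = iota x a * iota x b"
    and iota_star: "iota x (star a) = star (iota x a)"
    and iota_one: "iota x 1 = 1"
    and iota_bij: "bij (iota x)"
    and iota_comp: "iota x \<circ> iota y = iota (x + y)"
    and iota_supp: "A \<in> obs Ob \<Longrightarrow>
        iota x A \<in> obs Ob \<and> supp Ob (iota x A) = (\<lambda>y. y + x) ` supp Ob A"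

definition is_state :: "(complex \<Rightarrow> 'a \<Rightarrow> 'a) \<Rightarrow> ('a \<Rightarrow> 'a) \<Rightarrow> ('a::real_normed_algebra_1 \<Rightarrow> complex) \<Rightarrow> bool" where
  "is_state csmult star \<omega> \<longleftrightarrow>
     (\<forall>a b. \<omega> (a + b) = \<omega> a + \<omega> b) \<and>
     (\<forall>c a. \<omega> (csmult c a) = c * \<omega> a) \<and>
     (\<forall>a. Im (\<omega> (star a * a)) = 0 \<and> Re (\<omega> (star a * a)) \<ge> 0) \<and>
     \<omega> 1 = 1"

definition clustering_state ::
  "(complex \<Rightarrow> 'a \<Rightarrow> 'a) \<Rightarrow> ('a \<Rightarrow> 'a) \<Rightarrow> ((int^'d) set \<Rightarrow> 'a set) \<Rightarrow> (int^'d \<Rightarrow> 'a \<Rightarrow> 'a)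
     \<Rightarrow> ('a::real_normed_algebra_1 \<Rightarrow> complex) \<Rightarrow> bool" where
  "clustering_state csmult star Ob iota \<omega> \<longleftrightarrow>
     is_state csmult star \<omega> \<and>
     (\<forall>x a. \<omega> (iota x a) = \<omega> a) \<and>
     (\<exists>(\<nu>::nat \<Rightarrow> real) (f::int \<Rightarrow> real) (p::real).
        (\<forall>l. \<nu> l > 0) \<and> (\<forall>d. f d > 0) \<and> p > real CARD('d) \<and>
        (\<forall>d>0. f d \<le> real_of_int d powr (-p)) \<and>
        (\<forall>l A B. A \<in> obs Ob \<and> B \<in> obs Ob \<and> card (supp Ob A) < l \<and> card (supp Ob B) < l \<and>
            supp Ob A \<noteq> {} \<and> supp Ob B \<noteq> {} \<longrightarrow>
            cmod (\<omega> (A * B) - \<omega> A * \<omega> B)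
              \<le> \<nu> l * norm A * norm B * f (int (supp_dist Ob A B))))"

end

theory Submission
  imports Defs
begin

lemma sum1_nat: "(q::real) > 1 \<Longrightarrow> (\<lambda>n::nat. (1 + real n) powr (-q)) summable_on UNIV"
proof -
  assume q: "q > 1"
  have "summable (\<lambda>n::nat. real n powr (-q))" using q by (subst summable_real_powr_iff) auto
  then have "summable (\<lambda>n::nat. real (Suc n) powr (-q))" by (subst summable_Suc_iff)
  then have "summable (\<lambda>n::nat. (1 + real n) powr (-q))" by (simp add: add.commute)
  then show ?thesis by (rule summable_nonneg_imp_summable_on) auto
qed

lemma sum1_int: "(q::real) > 1 \<Longrightarrow> (\<lambda>n::int. (1 + real_of_int \<bar>n\<bar>) powr (-q)) summable_on UNIV"
proof -
  assume q: "q > 1"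
  let ?h = "\<lambda>n::int. (1 + real_of_int \<bar>n\<bar>) powr (-q)"
  have a: "?h summable_on (range int)"
    by (subst summable_on_reindex) (use sum1_nat[OF q] in \<open>auto simp: o_def\<close>)
  have b: "?h summable_on (range (\<lambda>n. - int n))"
    by (subst summable_on_reindex) (use sum1_nat[OF q] in \<open>auto simp: o_def inj_on_def\<close>)
  have "UNIV = range int \<union> range (\<lambda>n. - int n)"
    by (auto simp: image_def) (metis int_cases2)
  then show ?thesis using summable_on_union[OF a b] by simp
qed

lemma sumD: fixes q::real assumes q: "q > 1"
  shows "(\<lambda>x::int^'d. \<Prod>i\<in>UNIV. (1 + real_of_int \<bar>x$i\<bar>) powr (-q)) summable_on UNIV"
proof -
  let ?h = "\<lambda>n::int. (1 + real_of_int \<bar>n\<bar>) powr (-q)"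
  have h: "Infinite_Set_Sum.abs_summable_on ?h UNIV"
    using sum1_int[OF q] by (simp flip: abs_summable_equivalent)
  have "Infinite_Set_Sum.abs_summable_on (\<lambda>g::'d\<Rightarrow>int. \<Prod>i\<in>UNIV. ?h (g i)) (PiE UNIV (\<lambda>_. UNIV))"
    by (rule abs_summable_on_prod_PiE) (use h in auto)
  then have P: "(\<lambda>g::'d\<Rightarrow>int. \<Prod>i\<in>UNIV. ?h (g i)) summable_on UNIV"
    by (simp flip: abs_summable_equivalent add: abs_summable_summable)
  have "range (vec_nth :: int^'d \<Rightarrow> 'd \<Rightarrow> int) = UNIV"
    by (rule surjI[of _ vec_lambda]) (simp add: fun_eq_iff)
  then have "(\<lambda>g::'d\<Rightarrow>int. \<Prod>i\<in>UNIV. ?h (g i)) summable_on (range (vec_nth :: int^'d \<Rightarrow> 'd \<Rightarrow> int))"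
    using P by simp
  then have "((\<lambda>g::'d\<Rightarrow>int. \<Prod>i\<in>UNIV. ?h (g i)) \<circ> vec_nth) summable_on UNIV"
    by (subst (asm) summable_on_reindex) (auto simp: inj_on_def vec_eq_iff)
  then show ?thesis by (simp add: o_def)
qed


sublocale quasi_local_cstar \<subseteq> V: vector_space csmult
  by unfold_locales (simp_all add: smult_add_right smult_add_left smult_assoc
      smult_of_real[of 1, simplified])

context quasi_local_cstar begin

lemma cs_one[simp]: "csmult 1 a = a" using smult_of_real[of 1] by simp
lemma cs_zero_left[simp]: "csmult 0 a = 0" using smult_of_real[of 0] by simp
lemma cs_zero_right[simp]: "csmult c 0 = 0" by (rule V.scale_zero_right)

lemma star_zero[simp]: "star 0 = 0"
  using star_add[of 0 0] by simp
lemma star_one[simp]: "star 1 = 1"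
proof -
  have "1 = star (star 1)" by (simp add: star_star)
  also have "\<dots> = star (star 1 * 1)" by simp
  also have "\<dots> = star 1 * star (star 1)" by (rule star_mult)
  also have "\<dots> = star 1" by (simp add: star_star)
  finally show ?thesis by simp
qed
lemma star_minus: "star (- a) = - star a"
  using star_add[of a "-a"] by (metis neg_eq_iff_add_eq_0 star_zero add.right_inverse)
lemma star_diff: "star (a - b) = star a - star b"
  using star_add[of a "-b"] by (simp add: star_minus)
lemma star_sum: "star (sum f S) = (\<Sum>x\<in>S. star (f x))"
  by (induction S rule: infinite_finite_induct) (simp_all add: star_add)
lemma star_power: "star (a ^ n) = star a ^ n"
  by (induction n) (simp_all add: star_mult power_commutes)

lemma norm_star[simp]: "norm (star a) = norm a"
proof -
  have le: "norm a \<le> norm (star a)" for a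
  proof (cases "a = 0")
    case False
    have "(norm a)^2 = norm (star a * a)" by (simp add: cstar_identity)
    also have "\<dots> \<le> norm (star a) * norm a" by (rule norm_mult_ineq)
    finally show ?thesis using False by (simp add: power2_eq_square)
  qed simp
  show ?thesis using le[of a] le[of "star a"] by (simp add: star_star)
qed

lemma iota_zero[simp]: "iota x 0 = 0"
  using iota_add[of x 0 0] by simp
lemma iota_minus: "iota x (- a) = - iota x a"
  using iota_add[of x a "-a"] by (metis neg_eq_iff_add_eq_0 iota_zero add.right_inverse)
lemma iota_diff: "iota x (a - b) = iota x a - iota x b"
  using iota_add[of x a "-b"] by (simp add: iota_minus)
lemma iota_sum: "iota x (sum f S) = (\<Sum>y\<in>S. iota x (f y))"
  by (induction S rule: infinite_finite_induct) (simp_all add: iota_add)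
lemma iota_power: "iota x (a ^ n) = iota x a ^ n"
  by (induction n) (simp_all add: iota_mult iota_one)
lemma iota_iota: "iota x (iota y a) = iota (x + y) a"
  using iota_comp[of x y] by (metis comp_apply)

lemma selfadj_power2: assumes "star k = k" shows "norm (k ^ (2^j)) = norm k ^ (2^j)"
proof (induction j)
  case (Suc j)
  have "k ^ (2 ^ Suc j) = star (k ^ 2 ^ j) * (k ^ 2 ^ j)"
    by (simp add: star_power assms power_add[symmetric] mult_2)
  then have "norm (k ^ (2 ^ Suc j)) = (norm (k ^ 2 ^ j))^2" by (simp add: cstar_identity)
  then show ?case using Suc by (simp add: power_mult[symmetric] mult.commute)
qed simp

lemma power_in_Ob: "finite X \<Longrightarrow> h \<in> Ob X \<Longrightarrow> h ^ n \<in> Ob X"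
  by (induction n) (simp_all add: O_one O_mult)

lemma findim_relation:
  assumes X: "finite X" and h: "h \<in> Ob X"
  shows "\<exists>d c. h ^ d = (\<Sum>i<d. csmult (c i) (h ^ i))"
proof -
  obtain Bs where Bs: "finite Bs" "Bs \<subseteq> Ob X" "Ob X = {\<Sum>b\<in>Bs. csmult (c b) b | c. True}"
    using O_findim[OF X] by blast
  have sp: "Ob X \<subseteq> V.span Bs"
  proof
    fix y assume "y \<in> Ob X"
    then obtain c where "y = (\<Sum>b\<in>Bs. csmult (c b) b)" using Bs(3) by blast
    then show "y \<in> V.span Bs" by (simp only:) (intro V.span_sum V.span_scale V.span_base)
  qed
  define n where "n = card Bs"
  show ?thesis
  proof (cases "inj_on (\<lambda>i. h ^ i) {..n}")
    case False
    then obtain i j where ij: "i \<le> n" "j \<le> n" "i \<noteq> j" "h ^ i = h ^ j"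
      unfolding inj_on_def by auto
    then obtain a b where ab: "a < b" "h ^ a = h ^ b"
      by (metis linorder_neqE_nat)
    show ?thesis
    proof (intro exI)
      show "h ^ b = (\<Sum>l<b. csmult (if l = a then 1 else 0) (h ^ l))"
      proof -
        have "(\<Sum>l<b. csmult (if l = a then 1 else 0) (h ^ l)) = (\<Sum>l<b. if l = a then h ^ l else 0)"
          by (rule sum.cong) auto
        also have "\<dots> = h ^ a" using ab by (simp add: sum.delta)
        finally show ?thesis using ab by simp
      qed
    qed
  next
    case True
    let ?P = "(\<lambda>i. h ^ i) ` {..n}"
    have cardP: "card ?P = n + 1" using True by (simp add: card_image)
    have Psp: "?P \<subseteq> V.span Bs" using sp power_in_Ob[OF X h] by blast
    have "V.dependent ?P"
    proof (rule ccontr)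
      assume "\<not> V.dependent ?P"
      then have "card ?P \<le> card Bs" using V.independent_span_bound[OF Bs(1) _ Psp] by blast
      then show False using cardP n_def by simp
    qed
    then obtain u where u: "\<exists>v\<in>?P. u v \<noteq> 0" "(\<Sum>v\<in>?P. csmult (u v) v) = 0"
      using V.dependent_finite[of ?P] by auto
    define w where "w i = u (h ^ i)" for i
    have w0: "(\<Sum>i\<le>n. csmult (w i) (h ^ i)) = 0"
      using u(2) by (subst (asm) sum.reindex[OF True]) (simp add: w_def)
    obtain i0 where i0: "i0 \<le> n" "w i0 \<noteq> 0" using u(1) w_def by auto
    define d where "d = Max {i. i \<le> n \<and> w i \<noteq> 0}"
    have "d \<in> {i. i \<le> n \<and> w i \<noteq> 0}" unfolding d_def
      by (rule Max_in) (use i0 in auto)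
    then have dmem: "d \<le> n \<and> w d \<noteq> 0" by simp
    have dmax: "i \<le> n \<Longrightarrow> w i \<noteq> 0 \<Longrightarrow> i \<le> d" for i
      unfolding d_def by (rule Max_ge) auto
    have "(\<Sum>i\<le>n. csmult (w i) (h ^ i)) = (\<Sum>i\<le>d. csmult (w i) (h ^ i))"
    proof (rule sum.mono_neutral_right)
      show "\<forall>i\<in>{..n} - {..d}. csmult (w i) (h ^ i) = 0"
        using dmax by (auto simp: not_le)
    qed (use dmem in auto)
    then have "(\<Sum>i<d. csmult (w i) (h ^ i)) + csmult (w d) (h ^ d) = 0"
      using w0 by (simp add: lessThan_Suc_atMost[symmetric])
    then have "csmult (w d) (h ^ d) = - (\<Sum>i<d. csmult (w i) (h ^ i))"
      by (simp add: eq_neg_iff_add_eq_0 add.commute)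
    then have "csmult (1 / w d) (csmult (w d) (h ^ d)) = csmult (1 / w d) (- (\<Sum>i<d. csmult (w i) (h ^ i)))"
      by simp
    then have "h ^ d = (\<Sum>i<d. csmult (- w i / w d) (h ^ i))"
      using dmem by (simp add: V.scale_sum_right V.scale_minus_right smult_assoc[symmetric]
          flip: sum_negf V.scale_minus_left)
    then show ?thesis by (intro exI[of _ d] exI[of _ "\<lambda>i. - w i / w d"])
  qed
qed

lemma power_growth:
  assumes rel: "k ^ d = (\<Sum>i<d. csmult (c i) (k ^ i))"
  shows "norm (k ^ n) \<le> (1 + (\<Sum>i<d. cmod (c i))) ^ n * max 1 (norm k) ^ (d - 1)"
proof (induction n rule: less_induct)
  case (less n)
  define B where "B = 1 + (\<Sum>i<d. cmod (c i))"
  define u where "u = max 1 (norm k)"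
  have B1: "B \<ge> 1" unfolding B_def by (simp add: sum_nonneg)
  have u1: "u \<ge> 1" unfolding u_def by simp
  show ?case
  proof (cases "n < d")
    case True
    have "norm (k ^ n) \<le> norm k ^ n" by (rule norm_power_ineq)
    also have "\<dots> \<le> u ^ n" unfolding u_def by (rule power_mono) auto
    also have "\<dots> \<le> u ^ (d - 1)" using True u1 by (intro power_increasing) auto
    also have "\<dots> \<le> B ^ n * u ^ (d - 1)" using B1 u1 by simp
    finally show ?thesis unfolding B_def u_def .
  next
    case False
    have "k ^ n = k ^ (n - d) * k ^ d" using False by (simp flip: power_add)
    also have "\<dots> = (\<Sum>i<d. csmult (c i) (k ^ (n - d + i)))"
      by (simp add: rel sum_distrib_left smult_mult_right[symmetric] power_add)
    finally have "norm (k ^ n) \<le> (\<Sum>i<d. norm (csmult (c i) (k ^ (n - d + i))))"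
      by (simp add: norm_sum)
    also have "\<dots> \<le> (\<Sum>i<d. cmod (c i) * (B ^ (n - 1) * u ^ (d - 1)))"
    proof (rule sum_mono)
      fix i assume i: "i \<in> {..<d}"
      have "norm (k ^ (n - d + i)) \<le> B ^ (n - d + i) * u ^ (d - 1)"
        using less[of "n - d + i"] i False unfolding B_def u_def by simp
      also have "\<dots> \<le> B ^ (n - 1) * u ^ (d - 1)"
        using B1 u1 i False by (intro mult_right_mono power_increasing) auto
      finally show "norm (csmult (c i) (k ^ (n - d + i))) \<le> cmod (c i) * (B ^ (n - 1) * u ^ (d - 1))"
        by (simp add: norm_smult mult_left_mono)
    qed
    also have "\<dots> = (\<Sum>i<d. cmod (c i)) * B ^ (n - 1) * u ^ (d - 1)"
      by (simp add: sum_distrib_right mult.assoc)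
    also have "\<dots> \<le> B ^ n * u ^ (d - 1)"
    proof (cases "n = 0")
      case True
      then show ?thesis using False by simp
    next
      case n0: False
      have "(\<Sum>i<d. cmod (c i)) * B ^ (n - 1) \<le> B * B ^ (n - 1)"
        unfolding B_def by (intro mult_right_mono) (auto simp: sum_nonneg)
      also have "\<dots> = B ^ n" using n0 by (simp flip: power_Suc)
      finally show ?thesis using u1 by (intro mult_right_mono) auto
    qed
    finally show ?thesis unfolding B_def u_def .
  qed
qed

lemma selfadj_bound:
  assumes sa: "star k = k" and rel: "k ^ d = (\<Sum>i<d. csmult (c i) (k ^ i))"
  shows "norm k \<le> (1 + (\<Sum>i<d. cmod (c i)))\<^sup>2"
proof -
  define B where "B = 1 + (\<Sum>i<d. cmod (c i))"
  have B1: "B \<ge> 1" unfolding B_def by (simp add: sum_nonneg)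
  show ?thesis
  proof (cases "norm k \<le> 1")
    case True
    then show ?thesis using B1 unfolding B_def[symmetric]
      by (smt (verit) one_le_power)
  next
    case False
    define M :: nat where "M = 2 ^ d"
    have M0: "M > 0" unfolding M_def by simp
    have dM: "d - 1 \<le> M" unfolding M_def
      by (metis diff_le_self less_exp order.strict_implies_order order.trans)
    have "norm k ^ (2 ^ Suc d) = norm (k ^ (2 ^ Suc d))" by (rule selfadj_power2[OF sa, symmetric])
    also have "\<dots> \<le> B ^ (2 ^ Suc d) * max 1 (norm k) ^ (d - 1)"
      using power_growth[OF rel] unfolding B_def by blast
    also have "\<dots> = B ^ (2 * M) * norm k ^ (d - 1)" using False by (simp add: M_def)
    also have "\<dots> \<le> B ^ (2 * M) * norm k ^ M"
      using False dM B1 by (intro mult_left_mono power_increasing) auto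
    finally have "norm k ^ M * norm k ^ M \<le> (B\<^sup>2) ^ M * norm k ^ M"
      by (simp add: M_def power_mult power_add[symmetric] mult_2 flip: power_mult)
    moreover have "norm k ^ M > 0" using False by (intro zero_less_power) (metis norm_zero zero_le_one zero_less_norm_iff)
    ultimately have "norm k ^ M \<le> (B\<^sup>2) ^ M" by (rule mult_right_le_imp_le)
    then have "norm k ^ Suc (M - 1) \<le> (B\<^sup>2) ^ Suc (M - 1)" using M0 by simp
    then have "norm k \<le> B\<^sup>2" by (rule power_le_imp_le_base) (use B1 in simp)
    then show ?thesis unfolding B_def .
  qed
qed

lemma norm_iota_bound:
  assumes "a \<in> obs Ob"
  shows "\<exists>K. \<forall>x. norm (iota x a) \<le> K"
proof -
  obtain X where X: "finite X" "a \<in> Ob X" using assms unfolding obs_def by blast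
  have h: "star a * a \<in> Ob X" using X by (simp add: O_mult O_star)
  obtain d c where rel: "(star a * a) ^ d = (\<Sum>i<d. csmult (c i) ((star a * a) ^ i))"
    using findim_relation[OF X(1) h] by blast
  define B where "B = 1 + (\<Sum>i<d. cmod (c i))"
  have B1: "B \<ge> 1" unfolding B_def by (simp add: sum_nonneg)
  show ?thesis
  proof (intro exI allI)
    fix x
    define k where "k = star (iota x a) * iota x a"
    have sa: "star k = k" unfolding k_def by (simp add: star_mult star_star)
    have kk: "k = iota x (star a * a)" unfolding k_def by (simp add: iota_mult iota_star)
    have "k ^ d = (\<Sum>i<d. csmult (c i) (k ^ i))"
      unfolding kk iota_power[symmetric] using rel by (simp add: iota_sum iota_smult)
    then have "norm k \<le> B\<^sup>2" using selfadj_bound[OF sa] unfolding B_def by blast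
    then have "(norm (iota x a))\<^sup>2 \<le> B\<^sup>2" unfolding k_def by (simp add: cstar_identity)
    then show "norm (iota x a) \<le> B" using B1 by (simp add: power2_le_iff_abs_le)
  qed
qed

end


lemma decay_bound:
  fixes x :: "int^'d" and p dd :: real
  assumes p: "p > 0" and n1: "(\<Sum>i\<in>UNIV. \<bar>x$i\<bar>) \<ge> 1"
    and dd: "dd \<ge> real_of_int (\<Sum>i\<in>UNIV. \<bar>x$i\<bar>) / 2"
  shows "dd powr (-p) \<le> 4 powr p * (\<Prod>i\<in>UNIV. (1 + real_of_int \<bar>x$i\<bar>) powr (-p / CARD('d)))"
proof -
  define n where "n = real_of_int (\<Sum>i\<in>UNIV. \<bar>x$i\<bar>)"
  have n1': "n \<ge> 1" using n1 unfolding n_def by linarith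
  have "dd powr (-p) \<le> (n/2) powr (-p)"
    using dd n1' p unfolding n_def by (intro powr_mono2') auto
  also have "\<dots> \<le> ((1 + n)/4) powr (-p)"
    using n1' p by (intro powr_mono2') auto
  also have "\<dots> = 4 powr p * (1 + n) powr (-p)"
    using n1' by (simp add: powr_divide powr_minus divide_simps)
  also have "(1 + n) powr (-p) \<le> (\<Prod>i\<in>UNIV. (1 + real_of_int \<bar>x$i\<bar>) powr (-p / CARD('d)))"
  proof -
    have le: "(\<Prod>i\<in>UNIV. (1 + real_of_int \<bar>x$i\<bar>)) \<le> (1 + n) ^ CARD('d)"
    proof -
      have "(\<Prod>i\<in>UNIV. (1 + real_of_int \<bar>x$i\<bar>)) \<le> (\<Prod>i\<in>(UNIV::'d set). 1 + n)"
      proof (rule prod_mono)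
        fix i :: 'd
        have "\<bar>x$i\<bar> \<le> (\<Sum>i\<in>UNIV. \<bar>x$i\<bar>)" by (rule member_le_sum) auto
        then show "0 \<le> 1 + real_of_int \<bar>x$i\<bar> \<and> 1 + real_of_int \<bar>x$i\<bar> \<le> 1 + n"
          unfolding n_def by (metis (no_types, lifting) abs_ge_zero add_le_cancel_left add_nonneg_nonneg
              of_int_abs of_int_le_iff of_int_sum zero_le_one)
      qed
      then show ?thesis by simp
    qed
    have pos: "(\<Prod>i\<in>UNIV. (1 + real_of_int \<bar>x$i\<bar>)) > 0" by (intro prod_pos) auto
    have "(1 + n) powr (-p) = ((1 + n) ^ CARD('d)) powr (-p / CARD('d))"
      using n1' by (simp add: powr_realpow[symmetric] powr_powr)
    also have "\<dots> \<le> (\<Prod>i\<in>UNIV. (1 + real_of_int \<bar>x$i\<bar>)) powr (-p / CARD('d))"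
      using le pos p by (intro powr_mono2') (auto simp: divide_nonpos_pos)
    also have "\<dots> = (\<Prod>i\<in>UNIV. (1 + real_of_int \<bar>x$i\<bar>) powr (-p / CARD('d)))"
      by (rule prod_powr_distrib)
    finally show ?thesis .
  qed
  then have "4 powr p * (1 + n) powr (-p) \<le> 4 powr p * (\<Prod>i\<in>UNIV. (1 + real_of_int \<bar>x$i\<bar>) powr (-p / CARD('d)))"
    by (intro mult_left_mono) auto
  finally show ?thesis .
qed



context quasi_local_cstar begin

lemma star_in: "finite Y \<Longrightarrow> star a \<in> Ob Y \<longleftrightarrow> a \<in> Ob Y"
  by (metis O_star star_star)

lemma supp_star: "supp Ob (star a) = supp Ob a"
  unfolding supp_def by (rule arg_cong[where f=The]) (auto simp: star_in fun_eq_iff)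

lemma supp_exists:
  assumes "a \<in> obs Ob"
  shows "finite (supp Ob a) \<and> a \<in> Ob (supp Ob a) \<and> (\<forall>Y. finite Y \<and> a \<in> Ob Y \<longrightarrow> supp Ob a \<subseteq> Y)"
proof -
  obtain X where X: "finite X" "a \<in> Ob X" using assms unfolding obs_def by blast
  obtain Y0 where Y0: "Y0 \<subseteq> X \<and> a \<in> Ob Y0" "\<forall>Y. Y \<subseteq> X \<and> a \<in> Ob Y \<longrightarrow> card Y0 \<le> card Y"
    using ex_has_least_nat[of "\<lambda>Y. Y \<subseteq> X \<and> a \<in> Ob Y" X card] X by blast
  have fin0: "finite Y0" using Y0 X finite_subset by blast
  have min: "Y0 \<subseteq> Y" if "finite Y" "a \<in> Ob Y" for Y
  proof -
    have "a \<in> Ob (Y0 \<inter> Y)" using O_inter[OF fin0 that(1)] Y0 that by blast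
    then have "card Y0 \<le> card (Y0 \<inter> Y)" using Y0 by blast
    then have "Y0 \<inter> Y = Y0" using fin0 by (meson Int_lower1 card_seteq)
    then show ?thesis by blast
  qed
  have P: "finite Y0 \<and> a \<in> Ob Y0 \<and> (\<forall>Y. finite Y \<and> a \<in> Ob Y \<longrightarrow> Y0 \<subseteq> Y)"
    using fin0 Y0 min by blast
  have "supp Ob a = Y0" unfolding supp_def
  proof (rule the_equality)
    fix Z assume "finite Z \<and> a \<in> Ob Z \<and> (\<forall>Y. finite Y \<and> a \<in> Ob Y \<longrightarrow> Z \<subseteq> Y)"
    then show "Z = Y0" using P by blast
  qed (rule P)
  then show ?thesis using P by simp
qed

lemma supp_empty:
  assumes "a \<in> obs Ob" "supp Ob a = {}"
  shows "\<exists>c. a = csmult c 1"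
  using supp_exists[OF assms(1)] assms(2) O_empty by auto

lemma obs_star: "a \<in> obs Ob \<Longrightarrow> star a \<in> obs Ob"
  unfolding obs_def using O_star by blast

end

lemma state_zero: "is_state cs st \<omega> \<Longrightarrow> \<omega> 0 = 0"
  unfolding is_state_def by (metis add_cancel_right_right add_0)
lemma state_add: "is_state cs st \<omega> \<Longrightarrow> \<omega> (a + b) = \<omega> a + \<omega> b"
  unfolding is_state_def by blast
lemma state_smult: "is_state cs st \<omega> \<Longrightarrow> \<omega> (cs c a) = c * \<omega> a"
  unfolding is_state_def by blast
lemma state_one: "is_state cs st \<omega> \<Longrightarrow> \<omega> 1 = 1"
  unfolding is_state_def by blast
lemma state_pos: "is_state cs st \<omega> \<Longrightarrow> Im (\<omega> (st a * a)) = 0 \<and> Re (\<omega> (st a * a)) \<ge> 0"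
  unfolding is_state_def by blast
lemma state_minus: "is_state cs st \<omega> \<Longrightarrow> \<omega> (- a) = - \<omega> a"
  using state_add[of cs st \<omega> a "-a"] state_zero[of cs st \<omega>] by (simp add: add_eq_0_iff)
lemma state_diff: "is_state cs st \<omega> \<Longrightarrow> \<omega> (a - b) = \<omega> a - \<omega> b"
  using state_add[of cs st \<omega> a "-b"] state_minus[of cs st \<omega> b] by simp
lemma state_sum: "is_state cs st \<omega> \<Longrightarrow> \<omega> (sum f S) = (\<Sum>x\<in>S. \<omega> (f x))"
  by (induction S rule: infinite_finite_induct) (simp_all add: state_zero state_add)

lemma finite_box: "finite {x::int^'d. \<forall>i. \<bar>x$i\<bar> \<le> R}"
proof (rule finite_subset)
  show "{x::int^'d. \<forall>i. \<bar>x$i\<bar> \<le> R} \<subseteq> vec_lambda ` (PiE UNIV (\<lambda>_. {-R..R}))"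
  proof
    fix x :: "int^'d" assume "x \<in> {x. \<forall>i. \<bar>x$i\<bar> \<le> R}"
    then have "vec_nth x \<in> PiE UNIV (\<lambda>_. {-R..R})" by (auto simp: abs_le_iff) (metis minus_le_iff)
    then show "x \<in> vec_lambda ` (PiE UNIV (\<lambda>_. {-R..R}))"
      by (metis image_eqI vec_nth_inverse)
  qed
qed (intro finite_imageI finite_PiE; simp)



context quasi_local_cstar begin

lemma dist_lower:
  fixes x :: "int^'d"
  assumes S: "finite S" "S \<noteq> {}"
  shows "int (Min {l1dist y z | y z. y \<in> (\<lambda>y. y + x) ` S \<and> z \<in> S})
     \<ge> (\<Sum>i\<in>UNIV. \<bar>x$i\<bar>) - (\<Sum>y\<in>S. \<Sum>z\<in>S. int (l1dist y z))"
proof -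
  let ?M = "{l1dist y z | y z. y \<in> (\<lambda>y. y + x) ` S \<and> z \<in> S}"
  have "?M = (\<lambda>(y,z). l1dist (y + x) z) ` (S \<times> S)" by auto
  then have fin: "finite ?M" and ne: "?M \<noteq> {}" using S by auto
  obtain y z where yz: "y \<in> S" "z \<in> S" "Min ?M = l1dist (y + x) z"
    using Min_in[OF fin ne] by auto
  have e1: "int (l1dist (y + x) z) = (\<Sum>i\<in>UNIV. \<bar>y$i + x$i - z$i\<bar>)"
    unfolding l1dist_def by (simp add: sum_nonneg)
  have e2: "int (l1dist y z) = (\<Sum>i\<in>UNIV. \<bar>y$i - z$i\<bar>)"
    unfolding l1dist_def by (simp add: sum_nonneg)
  have "(\<Sum>i\<in>UNIV. \<bar>x$i\<bar>) - int (l1dist y z) \<le> int (l1dist (y + x) z)"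
    unfolding e1 e2 by (simp add: sum_subtractf[symmetric] sum_mono abs_triangle_ineq4)
  moreover have "int (l1dist y z) \<le> (\<Sum>y\<in>S. \<Sum>z\<in>S. int (l1dist y z))"
  proof -
    have "int (l1dist y z) \<le> (\<Sum>z\<in>S. int (l1dist y z))"
      using S yz by (intro member_le_sum) auto
    also have "\<dots> \<le> (\<Sum>y\<in>S. \<Sum>z\<in>S. int (l1dist y z))"
      using S yz by (intro member_le_sum[of y S "\<lambda>y. \<Sum>z\<in>S. int (l1dist y z)"]) (auto intro: sum_nonneg)
    finally show ?thesis .
  qed
  ultimately show ?thesis using yz by linarith
qed

lemma g_summable:
  fixes \<omega> :: "'a \<Rightarrow> complex"
  assumes cs: "clustering_state csmult star Ob iota \<omega>" and A: "A \<in> obs Ob"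
  shows "(\<lambda>x. \<omega> (star (iota x A) * A) - \<omega> (star A) * \<omega> A) summable_on UNIV"
proof -
  have st: "is_state csmult star \<omega>" and inv: "\<And>x a. \<omega> (iota x a) = \<omega> a"
    using cs unfolding clustering_state_def by auto
  obtain \<nu> :: "nat \<Rightarrow> real" and f :: "int \<Rightarrow> real" and p :: real where
    \<nu>: "\<forall>l. \<nu> l > 0" and fpos: "\<forall>d. f d > 0" and pD: "p > real CARD('d)"
    and fdec: "\<forall>d>0. f d \<le> real_of_int d powr (-p)"
    and clus: "\<forall>l A B. A \<in> obs Ob \<and> B \<in> obs Ob \<and> card (supp Ob A) < l \<and> card (supp Ob B) < l \<and>
            supp Ob A \<noteq> {} \<and> supp Ob B \<noteq> {} \<longrightarrow>
            cmod (\<omega> (A * B) - \<omega> A * \<omega> B)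
              \<le> \<nu> l * norm A * norm B * f (int (supp_dist Ob A B))"
    using cs unfolding clustering_state_def by (elim conjE exE) (rule that, assumption+)
  have om_star: "\<omega> (star (iota x A)) = \<omega> (star A)" for x
    by (simp add: iota_star[symmetric] inv)
  show ?thesis
  proof (cases "supp Ob A = {}")
    case True
    then obtain c where c: "A = csmult c 1" using supp_empty[OF A] by blast
    have "\<omega> (star (iota x A) * A) - \<omega> (star A) * \<omega> A = 0" for x
    proof -
      have i: "iota x A = A" unfolding c by (simp add: iota_smult iota_one)
      have s: "star A = csmult (cnj c) 1" unfolding c by (simp add: star_smult)
      have "csmult (cnj c) 1 * csmult c 1 = csmult (cnj c) (1 * csmult c 1)"
        by (rule smult_mult_left[symmetric])
      also have "\<dots> = csmult (cnj c * c) 1" by (simp only: mult_1_left smult_assoc)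
      finally have "star A * A = csmult (cnj c * c) 1" using s c by simp
      then have o1: "\<omega> (star A * A) = cnj c * c" by (simp only: state_smult[OF st] state_one[OF st]) simp
      have o2: "\<omega> (star A) = cnj c" unfolding s by (simp only: state_smult[OF st] state_one[OF st]) simp
      have o3: "\<omega> A = c" unfolding c by (simp only: state_smult[OF st] state_one[OF st]) simp
      show ?thesis unfolding i o1 o2 o3 by simp
    qed
    then show ?thesis by simp
  next
    case False
    define S where "S = supp Ob A"
    have Sfin: "finite S" using supp_exists[OF A] S_def by blast
    have Sne: "S \<noteq> {}" using False S_def by blast
    obtain K where K: "\<And>x. norm (iota x A) \<le> K" using norm_iota_bound[OF A] by blast
    define l where "l = card S + 1"
    define T where "T = (\<Sum>y\<in>S. \<Sum>z\<in>S. int (l1dist y z))"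
    have T0: "T \<ge> 0" unfolding T_def by (intro sum_nonneg) auto
    define n1 where "n1 x = (\<Sum>i\<in>UNIV. \<bar>x$i\<bar>)" for x :: "int^'d"
    define H where "H x = (\<Prod>i\<in>UNIV. (1 + real_of_int \<bar>x$i\<bar>) powr (-(p / CARD('d))))" for x :: "int^'d"
    define C where "C = \<nu> l * K * norm A * 4 powr p"
    let ?g = "\<lambda>x. \<omega> (star (iota x A) * A) - \<omega> (star A) * \<omega> A"
    have p0: "p > 0" using pD by (smt (verit) of_nat_0_le_iff)
    have Hsum: "H summable_on UNIV"
      unfolding H_def by (rule sumD) (use pD in \<open>simp add: field_simps\<close>)
    have K0: "K \<ge> 0" using K[of 0] norm_ge_zero order_trans by blast
    have bound: "cmod (?g x) \<le> C * H x" if xb: "n1 x \<ge> 2 * T + 1" for x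
    proof -
      define B where "B = star (iota x A)"
      have iA: "iota x A \<in> obs Ob" "supp Ob (iota x A) = (\<lambda>y. y + x) ` S"
        using iota_supp[OF A] S_def by auto
      have Bobs: "B \<in> obs Ob" unfolding B_def using obs_star iA by blast
      have Bsupp: "supp Ob B = (\<lambda>y. y + x) ` S" unfolding B_def supp_star using iA by simp
      have cardB: "card (supp Ob B) = card S" unfolding Bsupp by (rule card_image) (simp add: inj_on_def)
      have "cmod (\<omega> (B * A) - \<omega> B * \<omega> A) \<le> \<nu> l * norm B * norm A * f (int (supp_dist Ob B A))"
        using clus Bobs A cardB Bsupp Sne False unfolding l_def S_def by auto
      moreover have "\<omega> B = \<omega> (star A)" unfolding B_def by (rule om_star)
      ultimately have c1: "cmod (?g x) \<le> \<nu> l * norm B * norm A * f (int (supp_dist Ob B A))"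
        unfolding B_def by simp
      define dd where "dd = supp_dist Ob B A"
      have "int dd \<ge> n1 x - T"
        unfolding dd_def supp_dist_def Bsupp n1_def T_def using dist_lower[OF Sfin Sne, of x] S_def by simp
      then have ddb: "real_of_int (int dd) \<ge> real_of_int (n1 x) / 2" and dd0: "int dd > 0"
        using xb T0 by linarith+
      have "f (int dd) \<le> real_of_int (int dd) powr (-p)" using fdec dd0 by blast
      also have "\<dots> \<le> 4 powr p * H x" unfolding H_def
        using decay_bound[OF p0 _ ddb[unfolded n1_def]] xb T0 unfolding n1_def by simp
      finally have fb: "f (int dd) \<le> 4 powr p * H x" .
      have "\<nu> l * norm B * norm A * f (int dd) \<le> \<nu> l * K * norm A * (4 powr p * H x)"
        using \<nu> fpos K[of x] fb K0 unfolding B_def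
        by (intro mult_mono mult_nonneg_nonneg) (auto simp: less_imp_le)
      then show ?thesis using c1 unfolding dd_def C_def by (simp add: mult.assoc)
    qed
    define E where "E = {x :: int^'d. n1 x < 2 * T + 1}"
    have Efin: "finite E"
    proof (rule finite_subset[OF _ finite_box[of "2 * T + 1"]])
      show "E \<subseteq> {x. \<forall>i. \<bar>x$i\<bar> \<le> 2 * T + 1}"
      proof safe
        fix x i assume "x \<in> E"
        moreover have "\<bar>x$i\<bar> \<le> n1 x" unfolding n1_def by (rule member_le_sum) auto
        ultimately show "\<bar>x$i\<bar> \<le> 2 * T + 1" unfolding E_def by simp
      qed
    qed
    have H0: "H x \<ge> 0" for x unfolding H_def by (intro prod_nonneg) auto
    have "(\<lambda>x. norm (?g x)) summable_on (UNIV - E)"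
    proof (rule summable_on_comparison_test)
      show "(\<lambda>x. C * H x) summable_on (UNIV - E)"
        using summable_on_cmult_right[OF summable_on_subset[OF Hsum]] by blast
      show "norm (?g x) \<le> C * H x" if "x \<in> UNIV - E" for x
        using bound[of x] that unfolding E_def by simp
    qed auto
    then have "?g summable_on (UNIV - E)" by (rule abs_summable_summable)
    moreover have "?g summable_on E" using Efin by simp
    ultimately have "?g summable_on ((UNIV - E) \<union> E)" by (rule summable_on_union)
    then show ?thesis by simp
  qed
qed

end


lemma card_box: "card {x::int^'d. \<forall>i. a \<le> x$i \<and> x$i < b} = nat (b - a) ^ CARD('d)"
proof -
  have e: "{x::int^'d. \<forall>i. a \<le> x$i \<and> x$i < b} = vec_lambda ` PiE UNIV (\<lambda>_. {a..<b})"
  proof safe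
    fix x :: "int^'d" assume "\<forall>i. a \<le> x$i \<and> x$i < b"
    then have "vec_nth x \<in> PiE UNIV (\<lambda>_. {a..<b})" by auto
    then show "x \<in> vec_lambda ` PiE UNIV (\<lambda>_. {a..<b})" by (metis image_eqI vec_nth_inverse)
  qed auto
  have inj: "inj_on (vec_lambda :: ('d \<Rightarrow> int) \<Rightarrow> int^'d) (PiE UNIV (\<lambda>_. {a..<b}))"
    by (rule inj_onI) (metis vec_lambda_inverse UNIV_I)
  show ?thesis unfolding e card_image[OF inj] by (simp add: card_PiE)
qed

lemma finite_box2: "finite {x::int^'d. \<forall>i. a \<le> x$i \<and> x$i < b}"
proof -
  have "{x::int^'d. \<forall>i. a \<le> x$i \<and> x$i < b} \<subseteq> {x. \<forall>i. \<bar>x$i\<bar> \<le> \<bar>a\<bar> + \<bar>b\<bar>}"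
  proof (safe)
    fix x :: "int^'d" and i assume "\<forall>i. a \<le> x$i \<and> x$i < b"
    then have "a \<le> x$i" "x$i < b" by auto
    then show "\<bar>x$i\<bar> \<le> \<bar>a\<bar> + \<bar>b\<bar>" by linarith
  qed
  then show ?thesis using finite_box finite_subset by blast
qed

lemma cesaro_step:
  fixes g :: "int^'d \<Rightarrow> complex" and \<epsilon> :: real
  assumes gs: "g summable_on UNIV" and e: "\<epsilon> > 0"
  shows "\<exists>n::nat. n > 0 \<and> cmod (of_nat (n ^ CARD('d)) * infsum g UNIV
      - (\<Sum>y\<in>{x::int^'d. \<forall>i. 0 \<le> x$i \<and> x$i < int n}. \<Sum>x\<in>{x::int^'d. \<forall>i. 0 \<le> x$i \<and> x$i < int n}. g (x - y)))
      \<le> real (n ^ CARD('d)) * (2 * \<epsilon>)"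
proof -
  define S where "S = infsum g UNIV"
  define G where "G = infsum (\<lambda>x. norm (g x)) UNIV"
  have ga: "(\<lambda>x. norm (g x)) summable_on UNIV"
    using gs summable_on_iff_abs_summable_on_complex by blast
  have Gfin: "(\<Sum>x\<in>F. norm (g x)) \<le> G" if "finite F" for F
    unfolding G_def using ga that by (intro finite_sum_le_infsum) auto
  have G0: "G \<ge> 0" using Gfin[of "{}"] by simp
  have SG: "norm S \<le> G" unfolding S_def G_def by (rule norm_infsum_bound) (use ga in simp)
  have "(sum g \<longlongrightarrow> S) (finite_subsets_at_top UNIV)"
    using gs unfolding S_def by (simp add: has_sum_def[symmetric])
  then have "eventually (\<lambda>Y. dist (sum g Y) S < \<epsilon>) (finite_subsets_at_top UNIV)"
    using e by (rule tendstoD)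
  then obtain F where F: "finite F" "\<And>Y. finite Y \<Longrightarrow> F \<subseteq> Y \<Longrightarrow> dist (sum g Y) S < \<epsilon>"
    unfolding eventually_finite_subsets_at_top by (metis UNIV_I subsetI)
  define R :: nat where "R = nat (\<Sum>z\<in>F. \<Sum>i\<in>UNIV. \<bar>z$i\<bar>)"
  have FR: "\<bar>z$i\<bar> \<le> int R" if "z \<in> F" for z i
  proof -
    have "\<bar>z$i\<bar> \<le> (\<Sum>i\<in>UNIV. \<bar>z$i\<bar>)" by (rule member_le_sum) auto
    also have "\<dots> \<le> (\<Sum>z\<in>F. \<Sum>i\<in>UNIV. \<bar>z$i\<bar>)"
      using F(1) that by (intro member_le_sum[of z F "\<lambda>z. \<Sum>i\<in>UNIV. \<bar>z$i\<bar>"]) (auto intro: sum_nonneg)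
    moreover have "0 \<le> (\<Sum>z\<in>F. \<Sum>i\<in>UNIV. \<bar>z$i\<bar>)" by (intro sum_nonneg) auto
    ultimately show ?thesis unfolding R_def by simp
  qed
  define D where "D = CARD('d)"
  define n :: nat where "n = 2 * R + 1 + nat \<lceil>4 * R * D * G / \<epsilon>\<rceil>"
  have n0: "n > 0" and n2R: "2 * R \<le> n" unfolding n_def by auto
  have nbig: "4 * R * D * G \<le> \<epsilon> * n"
  proof -
    have "4 * R * D * G / \<epsilon> \<le> real n" unfolding n_def by linarith
    then show ?thesis using e by (simp add: field_simps)
  qed
  define L where "L = {x::int^'d. \<forall>i. 0 \<le> x$i \<and> x$i < int n}"
  define L' where "L' = {x::int^'d. \<forall>i. int R \<le> x$i \<and> x$i < int n - int R}"
  have Lfin: "finite L" unfolding L_def by (rule finite_box2)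
  have L'L: "L' \<subseteq> L" unfolding L'_def L_def
  proof safe
    fix x :: "int^'d" and i assume "\<forall>i. int R \<le> x$i \<and> x$i < int n - int R"
    then have "int R \<le> x$i" "x$i < int n - int R" by auto
    then show "0 \<le> x$i" "x$i < int n" by linarith+
  qed
  have cardL: "card L = n ^ D" unfolding L_def D_def card_box by simp
  have cardL': "card L' = (n - 2 * R) ^ D" unfolding L'_def D_def card_box
    using n2R by (simp add: nat_diff_distrib nat_mult_distrib)
  define T where "T = (\<Sum>y\<in>L. \<Sum>x\<in>L. g (x - y))"
  have inner: "(\<Sum>x\<in>L. g (x - y)) = sum g ((\<lambda>x. x - y) ` L)" for y
    by (subst sum.reindex) (auto simp: inj_on_def)
  have good: "norm (S - (\<Sum>x\<in>L. g (x - y))) \<le> \<epsilon>" if "y \<in> L'" for y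
  proof -
    have "F \<subseteq> (\<lambda>x. x - y) ` L"
    proof
      fix z assume z: "z \<in> F"
      have "z + y \<in> L" unfolding L_def
      proof (intro CollectI allI)
        fix i
        show "0 \<le> (z + y)$i \<and> (z + y)$i < int n"
        proof -
          have "int R \<le> y$i" "y$i < int n - int R" using that unfolding L'_def by auto
          then show ?thesis using FR[OF z, of i] by (simp add: abs_le_iff)
        qed
      qed
      then show "z \<in> (\<lambda>x. x - y) ` L" by (intro image_eqI[of _ _ "z + y"]) auto
    qed
    then have "dist (sum g ((\<lambda>x. x - y) ` L)) S < \<epsilon>" using Lfin by (intro F(2)) auto
    then show ?thesis unfolding inner by (simp add: dist_norm norm_minus_commute)
  qed
  have bad: "norm (S - (\<Sum>x\<in>L. g (x - y))) \<le> 2 * G" for y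
  proof -
    have "norm (S - (\<Sum>x\<in>L. g (x - y))) \<le> norm S + norm (sum g ((\<lambda>x. x - y) ` L))"
      unfolding inner by (rule norm_triangle_ineq4)
    also have "norm (sum g ((\<lambda>x. x - y) ` L)) \<le> (\<Sum>x\<in>(\<lambda>x. x - y) ` L. norm (g x))"
      by (rule norm_sum)
    also have "\<dots> \<le> G" using Lfin by (intro Gfin) auto
    finally show ?thesis using SG by simp
  qed
  have "of_nat (card L) * S - T = (\<Sum>y\<in>L. S - (\<Sum>x\<in>L. g (x - y)))"
    unfolding T_def by (simp add: sum_subtractf)
  then have "norm (of_nat (card L) * S - T) \<le> (\<Sum>y\<in>L. norm (S - (\<Sum>x\<in>L. g (x - y))))"
    by (simp add: norm_sum)
  also have "\<dots> = (\<Sum>y\<in>L'. norm (S - (\<Sum>x\<in>L. g (x - y)))) + (\<Sum>y\<in>L - L'. norm (S - (\<Sum>x\<in>L. g (x - y))))"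
    using Lfin L'L by (metis (no_types, lifting) add.commute sum.subset_diff)
  also have "\<dots> \<le> (\<Sum>y\<in>L'. \<epsilon>) + (\<Sum>y\<in>L - L'. 2 * G)"
    using good bad by (intro add_mono sum_mono) auto
  also have "\<dots> = real (card L') * \<epsilon> + (real (card L) - real (card L')) * (2 * G)"
    using Lfin L'L by (simp add: card_Diff_subset finite_subset of_nat_diff card_mono)
  finally have est: "norm (of_nat (card L) * S - T) \<le> real (card L') * \<epsilon> + (real (card L) - real (card L')) * (2 * G)" .
  have nR: "real (card L) - real (card L') \<le> real (card L) * (2 * R * D / n)"
  proof -
    have x1: "-1 \<le> - (2 * real R / real n)" using n2R n0 by (simp add: field_simps)
    have "real (card L') = (real n - 2 * real R) ^ D" unfolding cardL' using n2R by (simp add: of_nat_diff)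
    also have "\<dots> = real n ^ D * (1 + - (2 * real R / real n)) ^ D"
      using n0 by (simp add: power_mult_distrib[symmetric] field_simps)
    also have "\<dots> \<ge> real n ^ D * (1 + real D * - (2 * real R / real n))"
      by (intro mult_left_mono Bernoulli_inequality x1) auto
    finally have "real (card L') \<ge> real n ^ D * (1 - real D * (2 * real R / real n))" by simp
    then show ?thesis unfolding cardL by (simp add: algebra_simps)
  qed
  have "real (card L') * \<epsilon> + (real (card L) - real (card L')) * (2 * G) \<le> real (card L) * \<epsilon> + real (card L) * (2 * R * D / n) * (2 * G)"
    using nR G0 e card_mono[OF Lfin L'L] by (intro add_mono mult_right_mono) auto
  also have "real (card L) * (2 * R * D / n) * (2 * G) \<le> real (card L) * \<epsilon>"
  proof -
    have "(2 * R * D / n) * (2 * G) \<le> \<epsilon>" using nbig n0 by (simp add: field_simps)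
    then show ?thesis by (metis mult.assoc mult_left_mono of_nat_0_le_iff)
  qed
  finally have "norm (of_nat (card L) * S - T) \<le> real (card L) * (2 * \<epsilon>)" using est by (simp add: algebra_simps)
  then show ?thesis using n0 unfolding S_def T_def L_def cardL[unfolded L_def] D_def by (intro exI[of _ n]) simp
qed



lemma cesaro:
  fixes g :: "int^'d \<Rightarrow> complex"
  assumes gs: "g summable_on UNIV"
    and pos: "\<And>L. finite L \<Longrightarrow> Im (\<Sum>y\<in>L. \<Sum>x\<in>L. g (x - y)) = 0 \<and> Re (\<Sum>y\<in>L. \<Sum>x\<in>L. g (x - y)) \<ge> 0"
  shows "Im (infsum g UNIV) = 0 \<and> Re (infsum g UNIV) \<ge> 0"
proof -
  define S where "S = infsum g UNIV"
  have key: "\<bar>Im S\<bar> \<le> 2 * \<epsilon> \<and> - (2 * \<epsilon>) \<le> Re S" if e: "\<epsilon> > 0" for \<epsilon>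
  proof -
    obtain n :: nat where n: "n > 0" and
      b: "cmod (of_nat (n ^ CARD('d)) * S
      - (\<Sum>y\<in>{x::int^'d. \<forall>i. 0 \<le> x$i \<and> x$i < int n}. \<Sum>x\<in>{x::int^'d. \<forall>i. 0 \<le> x$i \<and> x$i < int n}. g (x - y)))
      \<le> real (n ^ CARD('d)) * (2 * \<epsilon>)"
      using cesaro_step[OF gs e] unfolding S_def by blast
    define T where "T = (\<Sum>y\<in>{x::int^'d. \<forall>i. 0 \<le> x$i \<and> x$i < int n}. \<Sum>x\<in>{x::int^'d. \<forall>i. 0 \<le> x$i \<and> x$i < int n}. g (x - y))"
    define N where "N = real (n ^ CARD('d))"
    have N0: "N > 0" unfolding N_def using n by simp
    have T: "Im T = 0" "Re T \<ge> 0" using pos[OF finite_box2] unfolding T_def by auto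
    have b': "cmod (complex_of_real N * S - T) \<le> N * (2 * \<epsilon>)" using b unfolding T_def N_def by simp
    have "\<bar>Im (complex_of_real N * S - T)\<bar> \<le> N * (2 * \<epsilon>)" using abs_Im_le_cmod b' order_trans by blast
    then have i: "N * \<bar>Im S\<bar> \<le> N * (2 * \<epsilon>)" using T N0 by (simp add: abs_mult)
    have "\<bar>Re (complex_of_real N * S - T)\<bar> \<le> N * (2 * \<epsilon>)" using abs_Re_le_cmod b' order_trans by blast
    then have r: "N * (- (2 * \<epsilon>)) \<le> N * Re S" using T N0 by (simp add: abs_le_iff)
    have "- (2 * \<epsilon>) \<le> Re S" using mult_le_cancel_left_pos[OF N0, of "- (2 * \<epsilon>)" "Re S"] r by simp
    moreover have "\<bar>Im S\<bar> \<le> 2 * \<epsilon>" using mult_le_cancel_left_pos[OF N0, of "\<bar>Im S\<bar>" "2 * \<epsilon>"] i by simp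
    ultimately show ?thesis by simp
  qed
  have "Im S = 0"
  proof (rule ccontr)
    assume "Im S \<noteq> 0"
    then have "\<bar>Im S\<bar> \<le> 2 * (\<bar>Im S\<bar> / 4)" using key[of "\<bar>Im S\<bar> / 4"] by simp
    then show False using \<open>Im S \<noteq> 0\<close> by simp
  qed
  moreover have "Re S \<ge> 0"
  proof (rule ccontr)
    assume "\<not> Re S \<ge> 0"
    then have "- (2 * (- Re S / 4)) \<le> Re S" using key[of "- Re S / 4"] by simp
    then show False using \<open>\<not> Re S \<ge> 0\<close> by simp
  qed
  ultimately show ?thesis unfolding S_def by simp
qed

context quasi_local_cstar begin

lemma gram:
  fixes \<omega> :: "'a \<Rightarrow> complex"
  assumes st: "is_state csmult star \<omega>" and inv: "\<And>x a. \<omega> (iota x a) = \<omega> a" and L: "finite L"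
  shows "\<omega> (star (\<Sum>x\<in>L. iota x B) * (\<Sum>x\<in>L. iota x B)) = (\<Sum>y\<in>L. \<Sum>x\<in>L. \<omega> (star (iota (x - y) B) * B))"
proof -
  have t: "star (iota x B) * iota y B = iota y (star (iota (x - y) B) * B)" for x y
    by (simp add: iota_mult iota_star iota_iota)
  have "star (\<Sum>x\<in>L. iota x B) * (\<Sum>x\<in>L. iota x B) = (\<Sum>x\<in>L. \<Sum>y\<in>L. star (iota x B) * iota y B)"
    by (simp add: star_sum sum_product)
  then have "\<omega> (star (\<Sum>x\<in>L. iota x B) * (\<Sum>x\<in>L. iota x B)) = (\<Sum>x\<in>L. \<Sum>y\<in>L. \<omega> (star (iota (x - y) B) * B))"
    by (simp add: state_sum[OF st] t inv)
  also have "\<dots> = (\<Sum>y\<in>L. \<Sum>x\<in>L. \<omega> (star (iota (x - y) B) * B))" by (rule sum.swap)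
  finally show ?thesis .
qed

end

theorem theorem4p5:
  fixes csmult :: "complex \<Rightarrow> 'a::{real_normed_algebra_1, banach} \<Rightarrow> 'a"
    and star :: "'a \<Rightarrow> 'a"
    and Ob :: "(int^'d) set \<Rightarrow> 'a set"
    and iota :: "int^'d \<Rightarrow> 'a \<Rightarrow> 'a"
    and \<omega> :: "'a \<Rightarrow> complex"
  assumes "quasi_local_cstar csmult star Ob iota"
    and "clustering_state csmult star Ob iota \<omega>"
    and "A \<in> obs Ob"
  shows "(\<lambda>x. \<omega> (star (iota x A) * A) - \<omega> (star A) * \<omega> A) summable_on UNIV
    \<and> Im (\<Sum>\<^sub>\<infinity>x. \<omega> (star (iota x A) * A) - \<omega> (star A) * \<omega> A) = 0
    \<and> Re (\<Sum>\<^sub>\<infinity>x. \<omega> (star (iota x A) * A) - \<omega> (star A) * \<omega> A) \<ge> 0"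
proof -
  interpret quasi_local_cstar csmult star Ob iota by (rule assms(1))
  have st: "is_state csmult star \<omega>" and inv: "\<And>x a. \<omega> (iota x a) = \<omega> a"
    using assms(2) unfolding clustering_state_def by auto
  let ?g = "\<lambda>x. \<omega> (star (iota x A) * A) - \<omega> (star A) * \<omega> A"
  have gs: "?g summable_on UNIV" by (rule g_summable[OF assms(2,3)])
  define c where "c = \<omega> A"
  define A' where "A' = A - csmult c 1"
  have ident: "?g x = \<omega> (star (iota x A') * A')" for x
  proof -
    define P where "P = star (iota x A)"
    have s: "star (iota x A') = P - csmult (cnj c) 1"
      unfolding A'_def P_def by (simp add: iota_diff iota_smult iota_one star_diff star_smult)
    have m1: "P * csmult c 1 = csmult c P" by (metis smult_mult_right mult_1_right)
    have m2: "csmult (cnj c) 1 * A = csmult (cnj c) A" by (metis smult_mult_left mult_1_left)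
    have m3: "csmult (cnj c) 1 * csmult c 1 = csmult (cnj c * c) 1"
      by (metis smult_mult_left mult_1_left smult_assoc)
    have "star (iota x A') * A' = P * A - csmult c P - csmult (cnj c) A + csmult (cnj c * c) 1"
      unfolding s unfolding A'_def by (simp add: algebra_simps m1 m2 m3)
    then have "\<omega> (star (iota x A') * A') = \<omega> (P * A) - c * \<omega> P - cnj c * \<omega> A + cnj c * c"
      by (simp add: state_add[OF st] state_diff[OF st] state_smult[OF st] state_one[OF st])
    moreover have "\<omega> P = \<omega> (star A)" unfolding P_def by (simp add: iota_star[symmetric] inv)
    ultimately show ?thesis unfolding P_def c_def by (simp add: algebra_simps)
  qed
  have "Im (infsum ?g UNIV) = 0 \<and> Re (infsum ?g UNIV) \<ge> 0"
  proof (rule cesaro[OF gs])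
    fix L :: "(int^'d) set" assume L: "finite L"
    have "(\<Sum>y\<in>L. \<Sum>x\<in>L. ?g (x - y)) = \<omega> (star (\<Sum>x\<in>L. iota x A') * (\<Sum>x\<in>L. iota x A'))"
      unfolding ident gram[OF st inv L] ..
    then show "Im (\<Sum>y\<in>L. \<Sum>x\<in>L. ?g (x - y)) = 0 \<and> Re (\<Sum>y\<in>L. \<Sum>x\<in>L. ?g (x - y)) \<ge> 0"
      using state_pos[OF st] by simp
  qed
  then show ?thesis using gs by simp
qed


end
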